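(* (Operational Friendliness no-go theorem.) If a superobserver can perform arbitrary quantum operations on an observer and its environment, then no physical theory can satisfy Operational Friendliness. Precisely: in the Operational Friendliness scenario described in the context, there is a choice of qubit preparations $P_0,P_1$ and measurements $C$, $D$, $B$ for which the quantum-mechanical empirical distributions $\wp(c,d\mid x=0,y=0)$, $\wp(c,b\mid x=0,y=1)$, $\wp(a,d\mid x=1,y=0)$, $\wp(a,b\mid x=1,y=1)$ cannot be reproduced by any family of distributions $p(a,b,c,d\mid x,y)$ satisfying both Absoluteness of Observed Events and Operational Agency.
   Context: Operational Friendliness scenario: Alice prepares a qubit $S$ in a state $P_a$, where $a\in\{0,1\}$ takes each value with probability $1/2$. She sends $S$ to her friend Charlie, who performs a two-outcome measurement $C$ on $S$ with outcome $c\in\{0,1\}$, modelled (from outside Charlie's lab) by a unitary $U_C$ on $S$ together with Charlie's lab. Alice then has a binary choice $x\in\{0,1\}$: if $x=0$ she takes Charlie's outcome as hers; if $x=1$ she acts as a superobserver and applies $U_C^\dagger$, undoing Charlie's measurement and erasing the record of $c$. The system $S$ is then passed to Debbie, who performs a two-outcome measurement $D$ with outcome $d\in\{0,1\}$, modelled by a unitary $U_D$. Bob has a binary choice $y\in\{0,1\}$: if $y=0$ he takes Debbie's outcome as his outcome ($b=d$); if $y=1$ he applies $U_D^\dagger$, erasing $d$, and then performs a two-outcome measurement $B$ on $S$ with outcome $b\in\{0,1\}$. The empirically accessible (single-agent verifiable) distributions are $\wp(c,d\mid x=0,y=0)$, $\wp(c,b\mid x=0,y=1)$, $\wp(a,d\mid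 x=1,y=0)$, $\wp(a,b\mid x=1,y=1)$, computed by quantum theory (Born rule). Here $\wp$ denotes empirical distributions, $p$ theoretical ones. Absoluteness of Observed Events (AOE): every observed event is an absolute single event, not relative to anything or anyone; in this scenario it implies the existence, for each $x,y$, of joint distributions $p(a,b,c,d\mid x,y)$ over all observed outcomes (including erased ones) whose marginals reproduce the empirical distributions above. Operational Agency: any operational equivalence that would be verified by a hypothetical agent with access to all the relevant variables still holds even if it cannot be verified by a single agent. In this scenario it implies, e.g., $p(c\mid x,y)=p(c)$, $p(c,d\mid x,y)=p(c,d\mid x)$, $p(a,d\mid x,y)=p(a,d\mid x)$, $p(d\mid c,x,y)=p(d\mid c,y)$ and $p(b\mid c,x,y)=p(b\mid c,y)$. Operational Friendliness is the conjunction of AOE and Operational Agency. *)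

theory Defs
  imports "HOL-Analysis.Analysis"
begin

text \<open>Qubit operators: 2x2 complex matrices. Binary outcomes/choices are encoded
  as bool (False = 0, True = 1).\<close>

type_synonym qop = "complex^2^2"

definition adj :: "qop \<Rightarrow> qop" where
  "adj A = (\<chi> i j. cnj (A $ j $ i))"

definition qform :: "qop \<Rightarrow> complex^2 \<Rightarrow> complex" where
  "qform A v = (\<Sum>i\<in>UNIV. cnj (v $ i) * (A *v v) $ i)"

definition psd :: "qop \<Rightarrow> bool" where
  "psd A \<longleftrightarrow> (\<forall>v. Im (qform A v) = 0 \<and> Re (qform A v) \<ge> 0)"

definition qubit_state :: "qop \<Rightarrow> bool" where
  "qubit_state \<rho> \<longleftrightarrow> adj \<rho> = \<rho> \<and> psd \<rho> \<and> trace \<rho> = 1"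

text \<open>Two-outcome projective measurement (ideal von Neumann measurement,
  post-measurement update by the Lueders rule).\<close>
definition proj_meas :: "(bool \<Rightarrow> qop) \<Rightarrow> bool" where
  "proj_meas M \<longleftrightarrow> (\<forall>k. adj (M k) = M k \<and> M k ** M k = M k) \<and> M False + M True = mat 1"

definition born :: "qop \<Rightarrow> qop \<Rightarrow> real" where
  "born E \<rho> = Re (trace (E ** \<rho>))"

definition wp00 :: "(bool \<Rightarrow> qop) \<Rightarrow> (bool \<Rightarrow> qop) \<Rightarrow> (bool \<Rightarrow> qop) \<Rightarrow> bool \<Rightarrow> bool \<Rightarrow> real" where
  "wp00 P C D c d = (\<Sum>a\<in>UNIV. (1/2) * born (D d) (C c ** P a ** C c))"

definition wp01 :: "(bool \<Rightarrow> qop) \<Rightarrow> (bool \<Rightarrow> qop) \<Rightarrow> (bool \<Rightarrow> qop) \<Rightarrow> bool \<Rightarrow> bool \<Rightarrow> real" where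
  "wp01 P C B c b = (\<Sum>a\<in>UNIV. (1/2) * born (B b) (C c ** P a ** C c))"

definition wp10 :: "(bool \<Rightarrow> qop) \<Rightarrow> (bool \<Rightarrow> qop) \<Rightarrow> bool \<Rightarrow> bool \<Rightarrow> real" where
  "wp10 P D a d = (1/2) * born (D d) (P a)"

definition wp11 :: "(bool \<Rightarrow> qop) \<Rightarrow> (bool \<Rightarrow> qop) \<Rightarrow> bool \<Rightarrow> bool \<Rightarrow> real" where
  "wp11 P B a b = (1/2) * born (B b) (P a)"

text \<open>Theoretical distributions: p x y a b c d = p(a,b,c,d | x,y).\<close>
type_synonym dist = "bool \<Rightarrow> bool \<Rightarrow> bool \<Rightarrow> bool \<Rightarrow> bool \<Rightarrow> bool \<Rightarrow> real"

definition is_dist_family :: "dist \<Rightarrow> bool" where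
  "is_dist_family p \<longleftrightarrow> (\<forall>x y a b c d. p x y a b c d \<ge> 0) \<and>
     (\<forall>x y. (\<Sum>a\<in>UNIV. \<Sum>b\<in>UNIV. \<Sum>c\<in>UNIV. \<Sum>d\<in>UNIV. p x y a b c d) = 1)"

definition pc :: "dist \<Rightarrow> bool \<Rightarrow> bool \<Rightarrow> bool \<Rightarrow> real" where
  "pc p x y c = (\<Sum>a\<in>UNIV. \<Sum>b\<in>UNIV. \<Sum>d\<in>UNIV. p x y a b c d)"
definition pcd :: "dist \<Rightarrow> bool \<Rightarrow> bool \<Rightarrow> bool \<Rightarrow> bool \<Rightarrow> real" where
  "pcd p x y c d = (\<Sum>a\<in>UNIV. \<Sum>b\<in>UNIV. p x y a b c d)"
definition pcb :: "dist \<Rightarrow> bool \<Rightarrow> bool \<Rightarrow> bool \<Rightarrow> bool \<Rightarrow> real" where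
  "pcb p x y c b = (\<Sum>a\<in>UNIV. \<Sum>d\<in>UNIV. p x y a b c d)"
definition pad :: "dist \<Rightarrow> bool \<Rightarrow> bool \<Rightarrow> bool \<Rightarrow> bool \<Rightarrow> real" where
  "pad p x y a d = (\<Sum>b\<in>UNIV. \<Sum>c\<in>UNIV. p x y a b c d)"
definition pab :: "dist \<Rightarrow> bool \<Rightarrow> bool \<Rightarrow> bool \<Rightarrow> bool \<Rightarrow> real" where
  "pab p x y a b = (\<Sum>c\<in>UNIV. \<Sum>d\<in>UNIV. p x y a b c d)"

definition AOE :: "(bool \<Rightarrow> qop) \<Rightarrow> (bool \<Rightarrow> qop) \<Rightarrow> (bool \<Rightarrow> qop) \<Rightarrow> (bool \<Rightarrow> qop) \<Rightarrow> dist \<Rightarrow> bool" where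
  "AOE P C D B p \<longleftrightarrow> is_dist_family p \<and>
     (\<forall>c d. pcd p False False c d = wp00 P C D c d) \<and>
     (\<forall>c b. pcb p False True c b = wp01 P C B c b) \<and>
     (\<forall>a d. pad p True False a d = wp10 P D a d) \<and>
     (\<forall>a b. pab p True True a b = wp11 P B a b)"

text \<open>Operational Agency (the consequences listed in the scenario); conditional
  probabilities are ratios of marginals.\<close>
definition op_agency :: "dist \<Rightarrow> bool" where
  "op_agency p \<longleftrightarrow>
     (\<forall>x y x' y' c. pc p x y c = pc p x' y' c) \<and>
     (\<forall>x y y' c d. pcd p x y c d = pcd p x y' c d) \<and>
     (\<forall>x y y' a d. pad p x y a d = pad p x y' a d) \<and>
     (\<forall>x x' y c d. pcd p x y c d / pc p x y c = pcd p x' y c d / pc p x' y c) \<and>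
     (\<forall>x x' y c b. pcb p x y c b / pc p x y c = pcb p x' y c b / pc p x' y c)"

definition operational_friendliness :: "(bool \<Rightarrow> qop) \<Rightarrow> (bool \<Rightarrow> qop) \<Rightarrow> (bool \<Rightarrow> qop) \<Rightarrow> (bool \<Rightarrow> qop) \<Rightarrow> dist \<Rightarrow> bool" where
  "operational_friendliness P C D B p \<longleftrightarrow> AOE P C D B p \<and> op_agency p"

end

theory Submission
  imports Defs
begin

definition mk :: "complex \<Rightarrow> complex \<Rightarrow> complex \<Rightarrow> complex \<Rightarrow> qop" where
  "mk a b c d = (\<chi> i j. if i = 1 then (if j = 1 then a else b) else (if j = 1 then c else d))"

lemma mk_nth: "mk a b c d $ 1 $ 1 = a" "mk a b c d $ 1 $ 2 = b"
  "mk a b c d $ 2 $ 1 = c" "mk a b c d $ 2 $ 2 = d"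
  by (simp_all add: mk_def)

lemma mk_mult: "mk a b c d ** mk a' b' c' d' =
   mk (a*a' + b*c') (a*b' + b*d') (c*a' + d*c') (c*b' + d*d')"
  unfolding matrix_matrix_mult_def
  by (simp add: vec_eq_iff forall_2 sum_2 mk_nth)

lemma mk_add: "mk a b c d + mk a' b' c' d' = mk (a+a') (b+b') (c+c') (d+d')"
  by (simp add: vec_eq_iff forall_2 mk_nth)

lemma mk_one: "mat 1 = mk 1 0 0 1"
  by (simp add: vec_eq_iff forall_2 mk_nth mat_def)

lemma mk_adj: "adj (mk a b c d) = mk (cnj a) (cnj c) (cnj b) (cnj d)"
  by (simp add: vec_eq_iff forall_2 mk_nth adj_def)

lemma mk_trace: "trace (mk a b c d) = a + d"
  by (simp add: trace_def sum_2 mk_nth)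

lemma mk_qform: "qform (mk a b c d) v = cnj (v$1) * (a * v$1 + b * v$2) + cnj (v$2) * (c * v$1 + d * v$2)"
  by (simp add: qform_def sum_2 matrix_vector_mult_def mk_nth)

lemma mk_eq: "mk a b c d = mk a' b' c' d' \<longleftrightarrow> a = a' \<and> b = b' \<and> c = c' \<and> d = d'"
  by (metis mk_nth)

definition "PP a = (if a then mk 0 0 0 1 else mk 1 0 0 0)"
definition "CC a = (if a then mk (1/2) (-1/2) (-1/2) (1/2) else mk (1/2) (1/2) (1/2) (1/2))"
definition "DD a = (if a then mk (1/5) (-2/5) (-2/5) (4/5) else mk (4/5) (2/5) (2/5) (1/5))"
definition "BB a = (if a then mk (9/10) (-3/10) (-3/10) (1/10) else mk (1/10) (3/10) (3/10) (9/10))"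

lemma wp00_val: "wp00 PP CC DD c d = (if c = d then 9/20 else 1/20)"
  by (cases c; cases d; simp add: wp00_def PP_def CC_def DD_def born_def mk_mult mk_trace UNIV_bool)

lemma wp01_val: "wp01 PP CC BB c b = (if c = b then 2/5 else 1/10)"
  by (cases c; cases b; simp add: wp01_def PP_def CC_def BB_def born_def mk_mult mk_trace UNIV_bool)

lemma wp10_val: "wp10 PP DD a d = (if a = d then 2/5 else 1/10)"
  by (cases a; cases d; simp add: wp10_def PP_def DD_def born_def mk_mult mk_trace)

lemma wp11_val: "wp11 PP BB a b = (if a = b then 1/20 else 9/20)"
  by (cases a; cases b; simp add: wp11_def PP_def BB_def born_def mk_mult mk_trace)


lemma PP_state: "qubit_state (PP False)" "qubit_state (PP True)"
  by (simp_all add: qubit_state_def PP_def mk_adj mk_trace psd_def mk_qform)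

lemma CC_meas: "proj_meas CC"
  unfolding proj_meas_def CC_def by (auto simp: mk_adj mk_mult mk_add mk_one mk_eq)
lemma DD_meas: "proj_meas DD"
  unfolding proj_meas_def DD_def by (auto simp: mk_adj mk_mult mk_add mk_one mk_eq)
lemma BB_meas: "proj_meas BB"
  unfolding proj_meas_def BB_def by (auto simp: mk_adj mk_mult mk_add mk_one mk_eq)

lemma no_of: "\<not> operational_friendliness PP CC DD BB p"
proof
  assume "operational_friendliness PP CC DD BB p"
  then have A: "AOE PP CC DD BB p" and O: "op_agency p"
    unfolding operational_friendliness_def by auto
  have nn: "\<And>x y a b c d. p x y a b c d \<ge> 0" using A unfolding AOE_def is_dist_family_def by auto
  have e00: "\<And>c d. pcd p False False c d = wp00 PP CC DD c d" using A unfolding AOE_def by auto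
  have e01: "\<And>c b. pcb p False True c b = wp01 PP CC BB c b" using A unfolding AOE_def by auto
  have e10: "\<And>a d. pad p True False a d = wp10 PP DD a d" using A unfolding AOE_def by auto
  have e11: "\<And>a b. pab p True True a b = wp11 PP BB a b" using A unfolding AOE_def by auto
  have o1: "\<And>x y x' y' c. pc p x y c = pc p x' y' c" using O unfolding op_agency_def by simp
  have o2: "\<And>x y y' c d. pcd p x y c d = pcd p x y' c d" using O unfolding op_agency_def by simp
  have o3: "\<And>x y y' a d. pad p x y a d = pad p x y' a d" using O unfolding op_agency_def by simp
  have o4: "\<And>x x' y c d. pcd p x y c d / pc p x y c = pcd p x' y c d / pc p x' y c"
    using O unfolding op_agency_def by simp
  have o5: "\<And>x x' y c b. pcb p x y c b / pc p x y c = pcb p x' y c b / pc p x' y c"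
    using O unfolding op_agency_def by simp
  have pcsum: "pc p False False c = pcd p False False c False + pcd p False False c True" for c
    unfolding pc_def pcd_def by (simp add: UNIV_bool algebra_simps)
  have pcv: "pc p x y c = 1/2" for x y c
  proof -
    have "pc p x y c = pc p False False c" by (rule o1)
    then show ?thesis using pcsum[of c] e00 by (cases c) (auto simp: wp00_val)
  qed
  have hcd: "pcd p True True c d = wp00 PP CC DD c d" for c d
  proof -
    have "pcd p True False c d / pc p True False c = pcd p False False c d / pc p False False c"
      by (rule o4)
    then have "pcd p True False c d = pcd p False False c d" by (simp add: pcv)
    moreover have "pcd p True True c d = pcd p True False c d" by (rule o2)
    ultimately show ?thesis using e00 by simp
  qed
  have hcb: "pcb p True True c b = wp01 PP CC BB c b" for c b
  proof -
    have "pcb p True True c b / pc p True True c = pcb p False True c b / pc p False True c"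
      by (rule o5)
    then show ?thesis using e01 by (simp add: pcv)
  qed
  have had: "pad p True True a d = wp10 PP DD a d" for a d
  proof -
    have "pad p True True a d = pad p True False a d" by (rule o3)
    then show ?thesis using e10 by simp
  qed
  note all = hcd hcb had e11
  note all2 = all[unfolded pcd_def pcb_def pad_def pab_def wp00_val wp01_val wp10_val wp11_val, simplified UNIV_bool, simplified]
  note all3 = all2[of False False] all2[of False True] all2[of True False] all2[of True True]
  note all4 = all3[simplified]
  have nn16: "\<forall>a b c d. p True True a b c d \<ge> 0" using nn by blast
  note nn2 = nn16[unfolded all_bool_eq]
  show False
    using all4 nn2 by linarith
qed

theorem theorem2:
  shows "\<exists>P C D B. qubit_state (P False) \<and> qubit_state (P True) \<and>
           proj_meas C \<and> proj_meas D \<and> proj_meas B \<and>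
           \<not> (\<exists>p. operational_friendliness P C D B p)"
  using PP_state CC_meas DD_meas BB_meas no_of by blast

end
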